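(* Let $(\mathcal{M},d)$, $P$, $x^*$, $X_1,\dots,X_n$ be as in the context, with $\eta=d^\alpha$ for some $1<\alpha\le2$. Assume (A2) holds with the growth function $l(y,z)=\alpha2^{-\alpha+1}d(y,z)^{\alpha-1}$, exponent $\beta=2-2/\alpha$ and some $K>0$, and assume (B1') holds with constants $A_1,D_1>0$. Then for every $\delta>0$, $n\in\mathbb{N}$ and $0<\tau\le1$, $$ N\left(\tau\|H_{\delta,\eta}\|_{2,P_n},\mathcal{F}_\eta(\delta),\|\cdot\|_{2,P_n}\right)\le\left(\frac{A_1}{\tau^{1/(\alpha-1)}}\right)^{D_1}, $$ i.e. (B1) holds with $A=A_1^{\alpha-1}$ and $D=D_1/(\alpha-1)$. In particular, for $\eta=d^2$ (where (A2) holds with $l=d$, $K=\beta=1$), (B1') alone implies (B1) with $A=A_1$, $D=D_1$.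
   Context: $(\mathcal{M},d)$ is an NPC space: a Polish space such that for any $x_0,x_1$ there is $y$ with $d(z,y)^2\le\frac12d(z,x_0)^2+\frac12d(z,x_1)^2-\frac14d(x_0,x_1)^2$ for all $z$. $P$ is a Borel probability measure with finite second moment, $x^*\in\arg\min_x\int\eta(x,y)dP(y)$ (assumed to exist), $X_1,\dots,X_n$ i.i.d. with law $P$, $P_n$ the empirical measure, $\|f\|_{2,P_n}^2=\frac1n\sum_if(X_i)^2$. (A2): $l(x,x^* )^2\le K\left(\int(\eta(x,y)-\eta(x^*,y))dP(y)\right)^\beta$ for all $x$. Notation: $\eta_c(x,\cdot)=\eta(x,\cdot)-\int\eta(x,y)dP(y)$, $f_\eta(x,\cdot)=\eta_c(x,\cdot)-\eta_c(x^*,\cdot)$, $\mathcal{M}_\eta(\delta)=\{x:\int(\eta(x,y)-\eta(x^*,y))dP(y)\le\delta\}$, $\mathcal{F}_\eta(\delta)=\{f_\eta(x,\cdot):x\in\mathcal{M}_\eta(\delta)\}$, $H_{\delta,\eta}(y)=2\sqrt{K\delta^\beta}\int d(y,z)dP(z)$. $N(\tau,\mathcal{S},\rho)$ is the minimal number of $\rho$-balls of radius $\tau$ covering $\mathcal{S}$, and $B(x,r)$ the closed metric ball. (B1'): there are $A_1,D_1>0$ such that for every $r>0$ and $\tau\in(0,r]$, $N(\tau,B(x^*,r),d)\le(A_1r/\tau)^{D_1}$. (B1): there are $A,D>0$ with $N(\tau\|H_{\delta,\eta}\|_{2,P_n},\mathcal{F}_\eta(\delta),\|\cdot\|_{2,P_n})\le(A/\tau)^D$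 for all $\delta>0$, $n$, $0<\tau\le1$. *)

theory Defs
  imports "HOL-Probability.Probability"
begin

definition NPC_space :: "'a::metric_space itself \<Rightarrow> bool" where
  "NPC_space _ \<longleftrightarrow> (\<forall>x0 x1::'a. \<exists>y. \<forall>z.
      dist z y ^ 2 \<le> dist z x0 ^ 2 / 2 + dist z x1 ^ 2 / 2 - dist x0 x1 ^ 2 / 4)"

text \<open>Covering number: minimal number of closed \<open>\<rho>\<close>-balls of radius \<open>\<tau>\<close>
  (centres anywhere in the ambient type) covering \<open>S\<close>; \<open>\<infinity>\<close> if no finite cover.\<close>
definition covering_number :: "real \<Rightarrow> 'b set \<Rightarrow> ('b \<Rightarrow> 'b \<Rightarrow> real) \<Rightarrow> ereal" where
  "covering_number \<tau> S \<rho> =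
     Inf ((\<lambda>C. ereal (real (card C))) ` {C. finite C \<and> S \<subseteq> (\<Union>c\<in>C. {x. \<rho> c x \<le> \<tau>})})"

definition emp_norm :: "nat \<Rightarrow> (nat \<Rightarrow> 'a) \<Rightarrow> ('a \<Rightarrow> real) \<Rightarrow> real" where
  "emp_norm n x f = sqrt ((1 / real n) * (\<Sum>i=1..n. (f (x i))\<^sup>2))"

definition emp_dist :: "nat \<Rightarrow> (nat \<Rightarrow> 'a) \<Rightarrow> ('a \<Rightarrow> real) \<Rightarrow> ('a \<Rightarrow> real) \<Rightarrow> real" where
  "emp_dist n x f g = emp_norm n x (\<lambda>y. f y - g y)"

definition eta_c :: "'a measure \<Rightarrow> ('a \<Rightarrow> 'a \<Rightarrow> real) \<Rightarrow> 'a \<Rightarrow> 'a \<Rightarrow> real" where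
  "eta_c P \<eta> x y = \<eta> x y - (LINT z|P. \<eta> x z)"

definition f_eta :: "'a measure \<Rightarrow> ('a \<Rightarrow> 'a \<Rightarrow> real) \<Rightarrow> 'a \<Rightarrow> 'a \<Rightarrow> 'a \<Rightarrow> real" where
  "f_eta P \<eta> xs x y = eta_c P \<eta> x y - eta_c P \<eta> xs y"

definition M_eta :: "'a measure \<Rightarrow> ('a \<Rightarrow> 'a \<Rightarrow> real) \<Rightarrow> 'a \<Rightarrow> real \<Rightarrow> 'a set" where
  "M_eta P \<eta> xs \<delta> = {x. (LINT y|P. \<eta> x y - \<eta> xs y) \<le> \<delta>}"

definition F_eta :: "'a measure \<Rightarrow> ('a \<Rightarrow> 'a \<Rightarrow> real) \<Rightarrow> 'a \<Rightarrow> real \<Rightarrow> ('a \<Rightarrow> real) set" where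
  "F_eta P \<eta> xs \<delta> = f_eta P \<eta> xs ` M_eta P \<eta> xs \<delta>"

definition H_eta :: "'a::metric_space measure \<Rightarrow> real \<Rightarrow> real \<Rightarrow> real \<Rightarrow> 'a \<Rightarrow> real" where
  "H_eta P K \<beta> \<delta> y = 2 * sqrt (K * \<delta> powr \<beta>) * (LINT z|P. dist y z)"

end

theory Submission
  imports Defs
begin

lemma young_g:
  fixes g b c :: real
  assumes "0 < g" "g \<le> 1" "0 \<le> b" "0 < c"
  shows "b powr g * c powr (1 - g) \<le> g * b + (1 - g) * c"
proof (cases "b = 0")
  case True then show ?thesis using assms by simp
next
  case False
  then show ?thesis using Youngs_inequality_0[of g "1-g" b c] assms by simp
qed

lemma conc_tangent:
  fixes g b c :: real
  assumes "0 < g" "g \<le> 1" "0 \<le> b" "0 < c"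
  shows "b powr g \<le> c powr g + g * c powr (g - 1) * (b - c)"
proof -
  have "b powr g * c powr (1 - g) \<le> g * b + (1 - g) * c" using young_g assms by blast
  hence "b powr g * c powr (1 - g) * c powr (g - 1) \<le> (g * b + (1 - g) * c) * c powr (g - 1)"
    by (rule mult_right_mono) simp
  moreover have "c powr (1 - g) * c powr (g - 1) = 1" using assms by (simp flip: powr_add)
  moreover have "c * c powr (g - 1) = c powr g" using assms
    using powr_add[of c 1 "g - 1"] by simp
  ultimately have "b powr g \<le> (g * b + (1 - g) * c) * c powr (g - 1)" by (simp add: mult.assoc)
  also have "\<dots> = g * b * c powr (g - 1) + (1 - g) * (c * c powr (g - 1))" by (simp add: algebra_simps)
  also have "\<dots> = c powr g + g * c powr (g - 1) * (b - c)" using \<open>c * c powr (g - 1) = c powr g\<close> by (simp add: algebra_simps)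
  finally show ?thesis .
qed

lemma conv_tangent:
  fixes g x y :: real
  assumes "0 < g" "g \<le> 1" "0 \<le> x" "0 \<le> y"
  shows "x powr (1 + g) + (1 + g) * x powr g * (y - x) \<le> y powr (1 + g)"
proof (cases "x = 0")
  case True then show ?thesis using assms by simp
next
  case xpos: False
  hence x0: "x > 0" using assms by simp
  have xx: "x powr (1 + g) = x * x powr g" using x0 powr_add[of x 1 g] by simp
  show ?thesis
  proof (cases "y = 0")
    case True
    then show ?thesis using assms x0 xx by (simp add: algebra_simps)
  next
    case False
    hence y0: "y > 0" using assms by simp
    have "(y powr (1+g)) powr (1/(1+g)) * (x powr (1+g)) powr (g/(1+g))
        \<le> (1/(1+g)) * y powr (1+g) + (g/(1+g)) * x powr (1+g)"
      using Youngs_inequality_0[of "1/(1+g)" "g/(1+g)" "y powr (1+g)" "x powr (1+g)"] assms x0 y0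
      by (simp add: field_simps)
    moreover have "(y powr (1+g)) powr (1/(1+g)) = y" using assms y0 by (simp add: powr_powr)
    moreover have "(x powr (1+g)) powr (g/(1+g)) = x powr g" using assms x0 by (simp add: powr_powr)
    ultimately have "y * x powr g \<le> (1/(1+g)) * y powr (1+g) + (g/(1+g)) * x powr (1+g)" by simp
    also have "\<dots> = (y powr (1+g) + g * x powr (1+g)) / (1+g)" by (simp add: add_divide_distrib)
    finally have "(1+g) * (y * x powr g) \<le> (1+g) * ((y powr (1+g) + g * x powr (1+g)) / (1+g))"
      using assms by (intro mult_left_mono) auto
    hence "(1+g) * (y * x powr g) \<le> y powr (1+g) + g * x powr (1+g)"
      using assms by simp
    then show ?thesis using xx by (simp add: algebra_simps)
  qed
qed

lemma subadd_powr:
  fixes g x y :: real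
  assumes "0 < g" "g \<le> 1" "0 \<le> x" "0 \<le> y"
  shows "(x + y) powr g \<le> x powr g + y powr g"
proof (cases "x + y = 0")
  case True then show ?thesis using assms by simp
next
  case False
  hence s0: "x + y > 0" using assms by simp
  have k: "u * (x + y) powr (g - 1) \<le> u powr g" if "0 \<le> u" "u \<le> x + y" for u
  proof (cases "u = 0")
    case True then show ?thesis using assms by simp
  next
    case False
    hence "u > 0" using that by simp
    have "(x + y) powr (g - 1) \<le> u powr (g - 1)" using powr_mono2'[of "g-1" u "x+y"] assms that \<open>u>0\<close> by simp
    hence "u * (x + y) powr (g - 1) \<le> u * u powr (g - 1)" using \<open>u>0\<close> by simp
    also have "\<dots> = u powr g" using \<open>u>0\<close> powr_add[of u 1 "g - 1"] by simp
    finally show ?thesis .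
  qed
  have "(x + y) powr g = (x + y) * (x + y) powr (g - 1)" using s0 powr_add[of "x+y" 1 "g - 1"] by simp
  also have "\<dots> = x * (x + y) powr (g - 1) + y * (x + y) powr (g - 1)" by (simp add: algebra_simps)
  also have "\<dots> \<le> x powr g + y powr g" using k[of x] k[of y] assms by (intro add_mono) auto
  finally show ?thesis .
qed

lemma holder_powr:
  fixes g x y :: real
  assumes "0 < g" "g \<le> 1" "0 \<le> x" "0 \<le> y"
  shows "\<bar>x powr g - y powr g\<bar> \<le> \<bar>x - y\<bar> powr g"
proof (cases "y \<le> x")
  case True
  have "x powr g = (y + (x - y)) powr g" by simp
  also have "\<dots> \<le> y powr g + (x - y) powr g" using subadd_powr[of g y "x - y"] assms True by simp
  finally have "x powr g - y powr g \<le> \<bar>x - y\<bar> powr g" using True by simp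
  moreover have "y powr g \<le> x powr g" using True assms by (simp add: powr_mono2)
  ultimately show ?thesis by simp
next
  case False
  have "y powr g = (x + (y - x)) powr g" by simp
  also have "\<dots> \<le> x powr g + (y - x) powr g" using subadd_powr[of g x "y - x"] assms False by simp
  finally have "y powr g - x powr g \<le> \<bar>x - y\<bar> powr g" using False by simp
  moreover have "x powr g \<le> y powr g" using False assms by (simp add: powr_mono2)
  ultimately show ?thesis by simp
qed

lemma concav2_powr:
  fixes g x y :: real
  assumes "0 < g" "g \<le> 1" "0 \<le> x" "0 \<le> y"
  shows "x powr g + y powr g \<le> 2 powr (1 - g) * (x + y) powr g"
proof (cases "x + y = 0")
  case True
  hence "x = 0" "y = 0" using assms by auto
  then show ?thesis by simp
next
  case False
  define c where "c = (x + y) / 2"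
  have c0: "c > 0" using False assms c_def by simp
  have "x powr g \<le> c powr g + g * c powr (g - 1) * (x - c)" using conc_tangent assms c0 by simp
  moreover have "y powr g \<le> c powr g + g * c powr (g - 1) * (y - c)" using conc_tangent assms c0 by simp
  ultimately have "x powr g + y powr g \<le> 2 * c powr g + g * c powr (g - 1) * (x + y - 2 * c)"
    by (simp add: algebra_simps)
  also have "\<dots> = 2 * c powr g" using c_def by simp
  also have "\<dots> = 2 * ((x + y) powr g / 2 powr g)" unfolding c_def by (simp only: powr_divide)
  also have "\<dots> = 2 powr (1 - g) * (x + y) powr g" by (simp add: powr_diff)
  finally show ?thesis .
qed

lemma four_pow:
  fixes g :: real
  assumes "0 < g" "g \<le> 1"
  shows "2 - g \<le> 4 powr (1 - g)"
proof -
  have l4: "1 \<le> ln (4::real)"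
    using ln_ge_iff[of 4 1] exp_le by simp
  have "4 powr (1 - g) = exp ((1 - g) * ln 4)" by (simp add: powr_def)
  also have "\<dots> \<ge> 1 + (1 - g) * ln 4" by (rule exp_ge_add_one_self)
  finally have "1 + (1 - g) * ln 4 \<le> 4 powr (1 - g)" .
  moreover have "(1 - g) * 1 \<le> (1 - g) * ln 4" using l4 assms by (intro mult_left_mono) auto
  ultimately show ?thesis by simp
qed

lemma LL_core:
  fixes g a b p q s t :: real
  assumes g: "0 < g" "g \<le> 1" and ab: "0 \<le> b" "b \<le> a" "a - b \<le> t"
    and pq: "\<bar>p\<bar> \<le> s" "\<bar>q\<bar> \<le> s" and c: "a * p - b * q \<le> t * s"
  shows "a powr g * p - b powr g * q \<le> 2 powr (1 - g) * t powr g * s"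
proof -
  have s0: "0 \<le> s" using pq by simp
  have t0: "0 \<le> t" using ab by simp
  have R0: "0 \<le> 2 powr (1 - g) * t powr g * s" using s0 by simp
  show ?thesis
  proof (cases "a = 0")
    case True
    hence "b = 0" using ab by simp
    then show ?thesis using True R0 g by simp
  next
    case False
    hence a0: "a > 0" using ab by simp
    show ?thesis
    proof (cases "t = 0")
      case True
      hence "a = b" using ab by simp
      hence "a * (p - q) \<le> 0" using c True by (simp add: algebra_simps)
      hence "p - q \<le> 0" using a0 by (simp add: mult_le_0_iff)
      hence "a powr g * (p - q) \<le> 0" by (simp add: mult_nonneg_nonpos)
      then show ?thesis using \<open>a = b\<close> True g by (simp add: algebra_simps)
    next
      case False
      hence tpos: "t > 0" using t0 by simp
      define W where "W = a powr (g - 1) * (t - b) + b powr g"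
      have apg: "a powr g = a * a powr (g - 1)" using a0 powr_add[of a 1 "g - 1"] by simp
      have bcoef: "a powr (g - 1) * b - b powr g \<le> 0"
      proof (cases "b = 0")
        case True then show ?thesis by simp
      next
        case False
        hence "b > 0" using ab by simp
        have "a powr (g - 1) \<le> b powr (g - 1)" using powr_mono2'[of "g-1" b a] g ab \<open>b>0\<close> by simp
        hence "a powr (g - 1) * b \<le> b powr (g - 1) * b" using \<open>b>0\<close> by simp
        also have "\<dots> = b powr g" using \<open>b>0\<close> powr_add[of b 1 "g - 1"] by (simp add: mult.commute)
        finally show ?thesis by simp
      qed
      have bound1: "a powr g * p - b powr g * q \<le> s * W"
      proof -
        have "a powr g * p - b powr g * q = a powr (g - 1) * (a * p - b * q) + (a powr (g - 1) * b - b powr g) * q"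
          using apg by (simp add: algebra_simps)
        also have "\<dots> \<le> a powr (g - 1) * (t * s) + (a powr (g - 1) * b - b powr g) * (- s)"
        proof (rule add_mono)
          show "a powr (g - 1) * (a * p - b * q) \<le> a powr (g - 1) * (t * s)"
            using c by (intro mult_left_mono) auto
          show "(a powr (g - 1) * b - b powr g) * q \<le> (a powr (g - 1) * b - b powr g) * - s"
            using bcoef pq by (intro mult_left_mono_neg) auto
        qed
        also have "\<dots> = s * W" unfolding W_def by (simp add: algebra_simps)
        finally show ?thesis .
      qed
      have bound2: "a powr g * p - b powr g * q \<le> (a powr g + b powr g) * s"
      proof -
        have "a powr g * p \<le> a powr g * s" using pq by (intro mult_left_mono) auto
        moreover have "- (b powr g * q) \<le> b powr g * s" using pq
          by (metis abs_le_iff minus_mult_right mult_left_mono powr_ge_zero)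
        ultimately show ?thesis by (simp add: algebra_simps)
      qed
      show ?thesis
      proof (cases "a + b \<le> t")
        case True
        have "(a powr g + b powr g) * s \<le> 2 powr (1 - g) * (a + b) powr g * s"
          using concav2_powr[of g a b] g ab s0 by (intro mult_right_mono) auto
        also have "\<dots> \<le> 2 powr (1 - g) * t powr g * s"
          using True g ab s0 by (intro mult_right_mono mult_left_mono powr_mono2) auto
        finally show ?thesis using bound2 by simp
      next
        case abt: False
        have "W \<le> 2 powr (1 - g) * t powr g"
        proof (cases "b < t / 2")
          case True
          have tb: "t - b > 0" using True tpos by simp
          have "a powr (g - 1) \<le> (t - b) powr (g - 1)" using powr_mono2'[of "g-1" "t-b" a] g tb abt by simp
          hence "W \<le> (t - b) powr (g - 1) * (t - b) + b powr g" unfolding W_def using tb by simp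
          also have "(t - b) powr (g - 1) * (t - b) = (t - b) powr g" using tb powr_add[of "t-b" "g - 1" 1] by simp
          also have "(t - b) powr g + b powr g \<le> 2 powr (1 - g) * ((t - b) + b) powr g"
            using concav2_powr[of g "t-b" b] g tb ab by simp
          finally show ?thesis by simp
        next
          case bt2: False
          show ?thesis
          proof (cases "b \<le> t")
            case True
            have b0: "b > 0" using bt2 tpos by simp
            have "a powr (g - 1) \<le> b powr (g - 1)" using powr_mono2'[of "g-1" b a] g ab b0 by simp
            hence "W \<le> b powr (g - 1) * (t - b) + b powr g" unfolding W_def using True
              by (simp add: mult_right_mono)
            also have "\<dots> = b powr (g - 1) * t" using b0 powr_add[of b 1 "g - 1"] by (simp add: algebra_simps)
            also have "\<dots> \<le> (t / 2) powr (g - 1) * t" using powr_mono2'[of "g-1" "t/2" b] g bt2 tpos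
              by (intro mult_right_mono) auto
            also have "\<dots> = 2 powr (1 - g) * t powr g"
            proof -
              have "(t / 2) powr (g - 1) * t = (t powr (g - 1) * t) / 2 powr (g - 1)"
                by (simp add: powr_divide)
              also have "t powr (g - 1) * t = t powr g" using tpos powr_add[of t "g - 1" 1] by simp
              also have "2 powr (g - 1) = 1 / 2 powr (1 - g)" using powr_minus_divide[of 2 "1 - g"] by simp
              finally show ?thesis by simp
            qed
            finally show ?thesis .
          next
            case False
            hence bgt: "b > t" by simp
            have "(b + t) powr (g - 1) \<le> a powr (g - 1)" using powr_mono2'[of "g-1" a "b+t"] g ab a0 by simp
            hence "(b + t) powr (g - 1) * (b - t) \<le> a powr (g - 1) * (b - t)" using bgt by (intro mult_right_mono) auto
            hence W1: "W \<le> b powr g - (b + t) powr (g - 1) * (b - t)" unfolding W_def by (simp add: algebra_simps)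
            have bt0: "b + t > 0" using tpos bgt by simp
            have "b powr g \<le> (b + t) powr g + g * (b + t) powr (g - 1) * (b - (b + t))"
              using conc_tangent[of g b "b + t"] g ab bt0 by simp
            moreover have "(b + t) powr g = (b + t) powr (g - 1) * (b + t)" using bt0 powr_add[of "b+t" "g - 1" 1] by simp
            ultimately have "W \<le> (b + t) powr (g - 1) * ((2 - g) * t)" using W1 by (simp add: algebra_simps)
            also have "\<dots> \<le> (2 * t) powr (g - 1) * ((2 - g) * t)"
              using powr_mono2'[of "g-1" "2*t" "b+t"] g bgt tpos by (intro mult_right_mono) auto
            also have "\<dots> = (2 - g) * 2 powr (g - 1) * t powr g"
            proof -
              have e1: "(2 * t) powr (g - 1) * ((2 - g) * t) = (2 - g) * 2 powr (g - 1) * (t powr (g - 1) * t)"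
                by (simp add: powr_mult algebra_simps)
              have "t powr (g - 1) * t = t powr g" using tpos powr_add[of t "g - 1" 1] by simp
              with e1 show ?thesis by simp

            qed
            also have "\<dots> \<le> 2 powr (1 - g) * t powr g"
            proof -
              have "(2 - g) \<le> 4 powr (1 - g)" using four_pow g by simp
              also have "(4::real) powr (1 - g) = 2 powr (1 - g) * 2 powr (1 - g)"
                using powr_mult[of 2 2 "1 - g"] by simp
              finally have "(2 - g) * 2 powr (g - 1) \<le> 2 powr (1 - g) * 2 powr (1 - g) * 2 powr (g - 1)"
                by (intro mult_right_mono) auto
              also have "\<dots> = 2 powr (1 - g)"
                by (simp add: mult.assoc flip: powr_add)
              finally show ?thesis by (intro mult_right_mono) auto
            qed
            finally show ?thesis .
          qed
        qed
        hence "s * W \<le> s * (2 powr (1 - g) * t powr g)" using s0 by (intro mult_left_mono) auto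
        then show ?thesis using bound1 by (simp add: algebra_simps)
      qed
    qed
  qed
qed

lemma LL:
  fixes g a b p q s t :: real
  assumes g: "0 < g" "g \<le> 1" and ab: "0 \<le> a" "0 \<le> b" "\<bar>a - b\<bar> \<le> t"
    and pq: "\<bar>p\<bar> \<le> s" "\<bar>q\<bar> \<le> s" and c: "a * p - b * q \<le> t * s"
  shows "a powr g * p - b powr g * q \<le> 2 powr (1 - g) * t powr g * s"
proof (cases "b \<le> a")
  case True
  then show ?thesis using LL_core[of g b a t p s q] assms by simp
next
  case False
  have "b powr g * (- q) - a powr g * (- p) \<le> 2 powr (1 - g) * t powr g * s"
    using LL_core[of g a b t "-q" s "-p"] assms False by (simp add: algebra_simps)
  then show ?thesis by simp
qed

lemma local_alpha:
  fixes g a b a' b' s t :: real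
  assumes g: "0 < g" "g \<le> 1"
    and nn: "0 \<le> a" "0 \<le> b" "0 \<le> a'" "0 \<le> b'"
    and tri: "\<bar>a - a'\<bar> \<le> s" "\<bar>b - b'\<bar> \<le> s" "\<bar>a - b\<bar> \<le> t"
    and q2: "a\<^sup>2 - b\<^sup>2 - a'\<^sup>2 + b'\<^sup>2 \<le> 2 * t * s"
  shows "a powr (1+g) - b powr (1+g) - a' powr (1+g) + b' powr (1+g)
         \<le> (1+g) * 2 powr (1-g) * t powr g * s + 3 * (1+g) * (s powr g * s)"
proof -
  define p where "p = a - a'"
  define q where "q = b - b'"
  have s0: "0 \<le> s" using tri by simp
  have t0: "0 \<le> t" using tri by simp
  have T1: "a powr (1+g) - a' powr (1+g) \<le> (1+g) * a powr g * p"
    using conv_tangent[of g a a'] g nn unfolding p_def by (simp add: algebra_simps)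
  have T2: "b' powr (1+g) - b powr (1+g) \<le> (1+g) * b' powr g * (b' - b)"
    using conv_tangent[of g b' b] g nn by (simp add: algebra_simps)
  have hb: "\<bar>b' powr g - b powr g\<bar> \<le> s powr g"
  proof -
    have "\<bar>b' powr g - b powr g\<bar> \<le> \<bar>b' - b\<bar> powr g" using holder_powr g nn by simp
    also have "\<dots> \<le> s powr g" using tri g by (intro powr_mono2) auto
    finally show ?thesis .
  qed
  have T3: "b' powr g * (b' - b) \<le> - (b powr g * q) + s powr g * s"
  proof -
    have e: "b' powr g * (b' - b) = - (b powr g * q) + (- (b' powr g - b powr g) * q)"
      unfolding q_def by (simp add: algebra_simps)
    have "- (b' powr g - b powr g) * q \<le> \<bar>b' powr g - b powr g\<bar> * \<bar>q\<bar>"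
      by (metis abs_ge_minus_self abs_mult order_trans abs_ge_self mult_minus_left)
    also have "\<bar>b' powr g - b powr g\<bar> * \<bar>q\<bar> \<le> s powr g * s"
      using hb tri unfolding q_def by (intro mult_mono) auto
    finally show ?thesis using e by simp
  qed
  have cst: "a * p - b * q \<le> (t + s / 2) * s"
  proof -
    have "a'\<^sup>2 = a\<^sup>2 - 2 * a * p + p\<^sup>2" unfolding p_def by (simp add: power2_eq_square algebra_simps)
    moreover have "b'\<^sup>2 = b\<^sup>2 - 2 * b * q + q\<^sup>2" unfolding q_def by (simp add: power2_eq_square algebra_simps)
    ultimately have "2 * (a * p) - p\<^sup>2 - 2 * (b * q) + q\<^sup>2 \<le> 2 * (t * s)" using q2 by (simp add: algebra_simps)
    moreover have "p\<^sup>2 \<le> s\<^sup>2" using tri unfolding p_def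
      by (metis abs_le_square_iff abs_of_nonneg s0 abs_abs order_trans abs_ge_self) 
    moreover have "0 \<le> q\<^sup>2" by simp
    ultimately have "2 * (a * p - b * q) \<le> 2 * (t * s) + s\<^sup>2" by (smt (verit))
    moreover have "(t + s / 2) * s = t * s + s\<^sup>2 / 2" by (simp add: power2_eq_square algebra_simps)
    ultimately show ?thesis by simp
  qed
  have L: "a powr g * p - b powr g * q \<le> 2 powr (1 - g) * (t + s/2) powr g * s"
    using LL[of g a b "t + s/2" p s q] g nn tri cst s0 unfolding p_def q_def by simp
  have "(t + s/2) powr g \<le> t powr g + (s/2) powr g" using subadd_powr g t0 s0 by simp
  hence "2 powr (1 - g) * (t + s/2) powr g * s \<le> 2 powr (1 - g) * (t powr g + (s/2) powr g) * s"
    using s0 by (intro mult_right_mono mult_left_mono) auto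
  also have "\<dots> = 2 powr (1 - g) * t powr g * s + 2 powr (1 - g) * (s/2) powr g * s" by (simp add: algebra_simps)
  also have "2 powr (1 - g) * (s/2) powr g \<le> 2 * s powr g"
  proof -
    have "2 powr (1 - g) \<le> 2 powr 1" using g by (intro powr_mono) auto
    moreover have "(s/2) powr g \<le> s powr g" using g s0 by (intro powr_mono2) auto
    ultimately have "2 powr (1 - g) * (s/2) powr g \<le> 2 * s powr g" by (intro mult_mono) auto
    then show ?thesis .
  qed
  hence "2 powr (1 - g) * (s/2) powr g * s \<le> 2 * s powr g * s" using s0 by (intro mult_right_mono) auto
  finally have L2: "a powr g * p - b powr g * q \<le> 2 powr (1 - g) * t powr g * s + 2 * (s powr g * s)"
    using L by simp
  have "a powr (1+g) - b powr (1+g) - a' powr (1+g) + b' powr (1+g)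
        \<le> (1+g) * a powr g * p + (1+g) * b' powr g * (b' - b)" using T1 T2 by simp
  also have "\<dots> \<le> (1+g) * a powr g * p + (1+g) * (- (b powr g * q) + s powr g * s)"
    using T3 g by (intro add_left_mono) (simp add: mult.assoc)
  also have "\<dots> = (1+g) * (a powr g * p - b powr g * q) + (1+g) * (s powr g * s)" by (simp add: algebra_simps)
  also have "\<dots> \<le> (1+g) * (2 powr (1 - g) * t powr g * s + 2 * (s powr g * s)) + (1+g) * (s powr g * s)"
    using L2 g by (intro add_right_mono mult_left_mono) auto
  also have "\<dots> = (1+g) * 2 powr (1-g) * t powr g * s + 3 * (1+g) * (s powr g * s)" by (simp add: algebra_simps)
  finally show ?thesis .
qed

definition Qk :: "('a \<Rightarrow> 'a \<Rightarrow> real) \<Rightarrow> 'a \<Rightarrow> 'a \<Rightarrow> 'a \<Rightarrow> 'a \<Rightarrow> real" where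
  "Qk g x c y z = g x y - g c y - g x z + g c z"

lemma tele1: "(\<Sum>i<N. Qk g (p i) (p (Suc i)) y z) = Qk g (p 0) (p N) y z"
  by (induction N) (simp_all add: Qk_def)

lemma tele2: "(\<Sum>j<M. Qk g x c (q j) (q (Suc j))) = Qk g x c (q 0) (q M)"
  by (induction M) (simp_all add: Qk_def)

lemma npc_mid:
  fixes x0 x1 :: "'a::metric_space"
  assumes "NPC_space TYPE('a)"
  shows "\<exists>m. \<forall>z. dist z m ^ 2 \<le> dist z x0 ^ 2 / 2 + dist z x1 ^ 2 / 2 - dist x0 x1 ^ 2 / 4"
  using assms unfolding NPC_space_def by blast

lemma mid_dist:
  fixes x0 x1 m :: "'a::metric_space"
  assumes "\<forall>z. dist z m ^ 2 \<le> dist z x0 ^ 2 / 2 + dist z x1 ^ 2 / 2 - dist x0 x1 ^ 2 / 4"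
  shows "dist x0 m \<le> dist x0 x1 / 2" "dist x1 m \<le> dist x0 x1 / 2"
proof -
  have "dist x0 m ^ 2 \<le> (dist x0 x1 / 2) ^ 2" using assms[rule_format, of x0] by (simp add: power_divide)
  then show "dist x0 m \<le> dist x0 x1 / 2" by (rule power2_le_imp_le) simp
  have "dist x1 m ^ 2 \<le> (dist x0 x1 / 2) ^ 2" using assms[rule_format, of x1] by (simp add: power_divide dist_commute)
  then show "dist x1 m \<le> dist x0 x1 / 2" by (rule power2_le_imp_le) simp
qed

lemma quad_ineq:
  fixes x c y z :: "'a::metric_space"
  assumes npc: "NPC_space TYPE('a)"
  shows "Qk (\<lambda>u v. (dist u v)\<^sup>2) x c y z \<le> (dist x c)\<^sup>2 + (dist y z)\<^sup>2"
proof -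
  obtain m where m: "\<forall>w. dist w m ^ 2 \<le> dist w x ^ 2 / 2 + dist w y ^ 2 / 2 - dist x y ^ 2 / 4"
    using npc_mid[OF npc, of x y] by blast
  have h1: "dist c m ^ 2 \<le> dist c x ^ 2 / 2 + dist c y ^ 2 / 2 - dist x y ^ 2 / 4" using m by blast
  have h2: "dist z m ^ 2 \<le> dist z x ^ 2 / 2 + dist z y ^ 2 / 2 - dist x y ^ 2 / 4" using m by blast
  have "dist c z \<le> dist c m + dist z m" using dist_triangle[of c z m] by (simp add: dist_commute)
  hence "(dist c z)\<^sup>2 \<le> (dist c m + dist z m)\<^sup>2" by (intro power_mono) auto
  also have "\<dots> \<le> 2 * (dist c m)\<^sup>2 + 2 * (dist z m)\<^sup>2"
    using sum_squares_ge_zero[of "dist c m - dist z m" 0] by (simp add: power2_eq_square algebra_simps)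
  finally have "(dist c z)\<^sup>2 \<le> 2 * (dist c m)\<^sup>2 + 2 * (dist z m)\<^sup>2" .
  then show ?thesis using h1 h2 unfolding Qk_def by (simp add: dist_commute)
qed

lemma dyadic_chain:
  fixes x c :: "'a::metric_space"
  assumes npc: "NPC_space TYPE('a)"
  shows "\<exists>P. P 0 = x \<and> P (2^k) = c \<and> (\<forall>j<2^k. dist (P j) (P (Suc j)) \<le> dist x c / 2^k)"
proof (induction k arbitrary: x c)
  case 0
  show ?case by (rule exI[of _ "\<lambda>j. if j = 0 then x else c"]) simp
next
  case (Suc k)
  obtain m where m: "\<forall>w. dist w m ^ 2 \<le> dist w x ^ 2 / 2 + dist w c ^ 2 / 2 - dist x c ^ 2 / 4"
    using npc_mid[OF npc, of x c] by blast
  note md = mid_dist[OF m]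
  obtain P1 where P1: "P1 0 = x" "P1 (2^k) = m" "\<forall>j<2^k. dist (P1 j) (P1 (Suc j)) \<le> dist x m / 2^k"
    using Suc.IH[of x m] by blast
  obtain P2 where P2: "P2 0 = m" "P2 (2^k) = c" "\<forall>j<2^k. dist (P2 j) (P2 (Suc j)) \<le> dist m c / 2^k"
    using Suc.IH[of m c] by blast
  define P where "P j = (if j \<le> 2^k then P1 j else P2 (j - 2^k))" for j
  have PP: "P j = P2 (j - 2^k)" if "2^k \<le> j" for j
    using that P1 P2 unfolding P_def by (cases "j = 2^k") auto
  have e1: "dist x m / 2^k \<le> dist x c / 2^Suc k" using md(1) by (simp add: field_simps)
  have e2: "dist m c / 2^k \<le> dist x c / 2^Suc k" using md(2) by (simp add: field_simps dist_commute)
  show ?case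
  proof (intro exI[of _ P] conjI allI impI, goal_cases)
    case 1 show "P 0 = x" using P1 unfolding P_def by simp
  next
    case 2 show "P (2 ^ Suc k) = c" using PP[of "2^Suc k"] P2 by simp
  next
    case (3 j)
    hence j: "j < 2 ^ Suc k" by simp
    show "dist (P j) (P (Suc j)) \<le> dist x c / 2 ^ Suc k"
    proof (cases "j < 2^k")
      case True
      hence "P j = P1 j" "P (Suc j) = P1 (Suc j)" unfolding P_def by auto
      then show ?thesis using P1(3) True e1 by fastforce
    next
      case False
      hence "P j = P2 (j - 2^k)" "P (Suc j) = P2 (Suc (j - 2^k))" using PP[of j] PP[of "Suc j"] by (auto simp: Suc_diff_le)
      moreover have "j - 2^k < 2^k" using j False by simp
      ultimately show ?thesis using P2(3) e2 by fastforce
    qed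
  qed
qed

lemma chain_dist:
  fixes P :: "nat \<Rightarrow> 'a::metric_space"
  assumes "\<forall>j<n. dist (P j) (P (Suc j)) \<le> e"
  shows "i \<le> j \<Longrightarrow> j \<le> n \<Longrightarrow> dist (P i) (P j) \<le> real (j - i) * e"
proof (induction j)
  case 0 then show ?case by simp
next
  case (Suc j)
  show ?case
  proof (cases "i = Suc j")
    case True then show ?thesis by simp
  next
    case False
    hence ij: "i \<le> j" using Suc.prems by simp
    have "dist (P i) (P (Suc j)) \<le> dist (P i) (P j) + dist (P j) (P (Suc j))" by (rule dist_triangle)
    also have "\<dots> \<le> real (j - i) * e + e" using Suc ij assms by (intro add_mono) auto
    also have "\<dots> = real (Suc j - i) * e" using ij by (simp add: Suc_diff_le algebra_simps)
    finally show ?thesis .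
  qed
qed

lemma div_bounds:
  fixes a N :: nat
  assumes "N > 0"
  shows "real (a div N) \<le> real a / real N" "real a / real N - 1 < real (a div N)"
proof -
  have eq: "real a = real N * real (a div N) + real (a mod N)"
    by (metis div_mult_mod_eq of_nat_add of_nat_mult mult.commute)
  have "a mod N < N" using assms by simp
  hence lt: "real (a mod N) < real N" by simp
  have "real a / real N = real (a div N) + real (a mod N) / real N" using eq assms by (simp add: field_simps)
  moreover have "0 \<le> real (a mod N) / real N" by simp
  moreover have "real (a mod N) / real N < 1" using lt assms by simp
  ultimately show "real (a div N) \<le> real a / real N" "real a / real N - 1 < real (a div N)" by linarith+
qed

lemma gen_chain:
  fixes x c :: "'a::metric_space"
  assumes npc: "NPC_space TYPE('a)" and N: "N \<ge> 1" and L: "L \<ge> (1::nat)"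
  shows "\<exists>p. p 0 = x \<and> p N = c \<and> (\<forall>i<N. dist (p i) (p (Suc i)) \<le> dist x c / N * (1 + 1 / L))"
proof -
  define k where "k = N * L"
  have k2: "real (N * L) \<le> 2 ^ k" unfolding k_def
    using less_exp[of "N*L"] by (metis less_imp_le of_nat_le_iff of_nat_numeral of_nat_power)
  obtain P where P: "P 0 = x" "P (2^k) = c" "\<forall>j<2^k. dist (P j) (P (Suc j)) \<le> dist x c / 2^k"
    using dyadic_chain[OF npc, of x k c] by blast
  define p where "p i = P (i * 2^k div N)" for i
  have N0: "N > 0" using N by simp
  show ?thesis
  proof (intro exI[of _ p] conjI allI impI)
    show "p 0 = x" using P unfolding p_def by simp
    show "p N = c" using P N0 unfolding p_def by simp
    fix i assume i: "i < N"
    define u where "u = i * 2^k div N"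
    define v where "v = Suc i * 2^k div N"
    have uv: "u \<le> v" unfolding u_def v_def by (intro div_le_mono mult_le_mono) auto
    have v2: "v \<le> 2^k"
    proof -
      have "Suc i * 2^k \<le> N * 2^k" using i by (intro mult_le_mono) auto
      hence "v \<le> N * 2^k div N" unfolding v_def by (rule div_le_mono)
      then show ?thesis using N0 by simp
    qed
    have "dist (p i) (p (Suc i)) = dist (P u) (P v)" unfolding p_def u_def v_def by simp
    also have "\<dots> \<le> real (v - u) * (dist x c / 2^k)" using chain_dist[OF P(3)] uv v2 by blast
    also have "real (v - u) \<le> real (2^k) / N + 1"
    proof -
      have "real v \<le> real (Suc i * 2^k) / N" unfolding v_def using div_bounds N0 by blast
      moreover have "real (i * 2^k) / N - 1 < real u" unfolding u_def using div_bounds N0 by blast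
      moreover have "real (Suc i * 2^k) / N = real (i * 2^k) / N + real (2^k) / N"
        by (simp add: add_divide_distrib)
      ultimately show ?thesis using uv by (simp add: of_nat_diff)
    qed
    hence "real (v - u) * (dist x c / 2^k) \<le> (real (2^k) / N + 1) * (dist x c / 2^k)"
      by (intro mult_right_mono) auto
    also have "\<dots> = dist x c / N + dist x c / 2^k" by (simp add: field_simps)
    also have "dist x c / 2^k \<le> dist x c / (N * L)"
      using k2 N L by (intro divide_left_mono) auto
    also have "dist x c / N + dist x c / (N * L) = dist x c / N * (1 + 1 / L)" using N0 L by (simp add: field_simps)
    finally show "dist (p i) (p (Suc i)) \<le> dist x c / N * (1 + 1 / L)" by simp
  qed
qed

lemma double_tele:
  "(\<Sum>i<N. \<Sum>j<M. Qk g (p i) (p (Suc i)) (q j) (q (Suc j))) = Qk g (p 0) (p N) (q 0) (q M)"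
proof -
  have "(\<Sum>i<N. \<Sum>j<M. Qk g (p i) (p (Suc i)) (q j) (q (Suc j))) = (\<Sum>i<N. Qk g (p i) (p (Suc i)) (q 0) (q M))"
    by (simp add: tele2)
  also have "\<dots> = Qk g (p 0) (p N) (q 0) (q M)" by (rule tele1)
  finally show ?thesis .
qed

lemma Q2_approx:
  fixes x c y z :: "'a::metric_space"
  assumes npc: "NPC_space TYPE('a)" and M: "M \<ge> (1::nat)"
    and t: "dist x c > 0" and s: "dist y z > 0"
  shows "Qk (\<lambda>u v. (dist u v)\<^sup>2) x c y z
     \<le> (1 + 1 / M)\<^sup>2 * (2 * dist x c * dist y z + (dist y z)\<^sup>2 / M)"
proof -
  define t where "t = dist x c"
  define s where "s = dist y z"
  have tp: "t > 0" and sp: "s > 0" using t s t_def s_def by auto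
  have Mp: "real M > 0" using M by simp
  define N where "N = nat \<lceil>M * t / s\<rceil>"
  have Nlo: "real N \<ge> M * t / s" unfolding N_def by linarith
  have "0 < M * t / s" using tp sp Mp by simp
  hence c0: "0 \<le> \<lceil>M * t / s\<rceil>" by (smt (verit) ceiling_correct of_int_0_le_iff)
  have "real N = real_of_int \<lceil>M * t / s\<rceil>" unfolding N_def using c0 by simp
  hence Nhi: "real N < M * t / s + 1" using ceiling_correct[of "M * t / s"] by linarith
  have Npos: "real N > 0" using Nlo tp sp Mp by (smt (verit) divide_pos_pos mult_pos_pos)
  hence N1: "N \<ge> 1" by simp
  obtain p where p: "p 0 = x" "p N = c" "\<forall>i<N. dist (p i) (p (Suc i)) \<le> t / N * (1 + 1 / M)"
    using gen_chain[OF npc N1 M, of x c] unfolding t_def by blast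
  obtain q where q: "q 0 = y" "q M = z" "\<forall>j<M. dist (q j) (q (Suc j)) \<le> s / M * (1 + 1 / M)"
    using gen_chain[OF npc M M, of y z] unfolding s_def by blast
  define A where "A = t / N * (1 + 1 / M)"
  define B where "B = s / M * (1 + 1 / M)"
  have "Qk (\<lambda>u v. (dist u v)\<^sup>2) x c y z
      = (\<Sum>i<N. \<Sum>j<M. Qk (\<lambda>u v. (dist u v)\<^sup>2) (p i) (p (Suc i)) (q j) (q (Suc j)))"
    using double_tele[where g="\<lambda>u v. (dist u v)\<^sup>2" and N=N and M=M and p=p and q=q] p q by simp
  also have "\<dots> \<le> (\<Sum>i<N. \<Sum>j<M. A\<^sup>2 + B\<^sup>2)"
  proof (intro sum_mono)
    fix i j assume i: "i \<in> {..<N}" and j: "j \<in> {..<M}"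
    have "Qk (\<lambda>u v. (dist u v)\<^sup>2) (p i) (p (Suc i)) (q j) (q (Suc j))
        \<le> (dist (p i) (p (Suc i)))\<^sup>2 + (dist (q j) (q (Suc j)))\<^sup>2" by (rule quad_ineq[OF npc])
    also have "\<dots> \<le> A\<^sup>2 + B\<^sup>2" using p(3) q(3) i j unfolding A_def B_def
      by (intro add_mono power_mono) auto
    finally show "Qk (\<lambda>u v. (dist u v)\<^sup>2) (p i) (p (Suc i)) (q j) (q (Suc j)) \<le> A\<^sup>2 + B\<^sup>2" .
  qed
  also have "\<dots> = real N * real M * (A\<^sup>2 + B\<^sup>2)" by simp
  also have "\<dots> = (1 + 1 / M)\<^sup>2 * (M * t\<^sup>2 / N + N * s\<^sup>2 / M)"
    unfolding A_def B_def using Npos Mp by (simp add: field_simps power2_eq_square)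
  also have "\<dots> \<le> (1 + 1 / M)\<^sup>2 * (2 * t * s + s\<^sup>2 / M)"
  proof (intro mult_left_mono)
    have "M * t\<^sup>2 / N \<le> t * s"
    proof -
      have "M * t \<le> N * s" using Nlo sp by (simp add: field_simps)
      hence "M * t * t \<le> N * s * t" using tp by (intro mult_right_mono) auto
      then show ?thesis using Npos by (simp add: field_simps power2_eq_square)
    qed
    moreover have "N * s\<^sup>2 / M \<le> t * s + s\<^sup>2 / M"
    proof -
      have "N * s \<le> (M * t / s + 1) * s" using Nhi sp by (intro mult_right_mono) auto
      also have "\<dots> = M * t + s" using sp by (simp add: field_simps)
      finally have "N * s * s \<le> (M * t + s) * s" using sp by (intro mult_right_mono) auto
      then show ?thesis using Mp by (simp add: field_simps power2_eq_square)
    qed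
    ultimately show "M * t\<^sup>2 / N + N * s\<^sup>2 / M \<le> 2 * t * s + s\<^sup>2 / M" by simp
  qed simp
  finally show ?thesis unfolding t_def s_def .
qed

lemma Q2_bound:
  fixes x c y z :: "'a::metric_space"
  assumes npc: "NPC_space TYPE('a)"
  shows "Qk (\<lambda>u v. (dist u v)\<^sup>2) x c y z \<le> 2 * dist x c * dist y z"
proof (cases "dist x c = 0 \<or> dist y z = 0")
  case True
  then show ?thesis unfolding Qk_def by auto
next
  case False
  hence t: "dist x c > 0" and s: "dist y z > 0" by auto
  define f where "f n = (1 + inverse (real (Suc n)))\<^sup>2 * (2 * dist x c * dist y z + (dist y z)\<^sup>2 * inverse (real (Suc n)))" for n
  have "f \<longlonglongrightarrow> (1 + 0)\<^sup>2 * (2 * dist x c * dist y z + (dist y z)\<^sup>2 * 0)"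
    unfolding f_def by (intro tendsto_intros LIMSEQ_inverse_real_of_nat)
  hence lim: "f \<longlonglongrightarrow> 2 * dist x c * dist y z" by simp
  show ?thesis
  proof (rule LIMSEQ_le_const[OF lim], intro exI allI impI)
    fix n :: nat
    have "Qk (\<lambda>u v. (dist u v)\<^sup>2) x c y z
      \<le> (1 + 1 / real (Suc n))\<^sup>2 * (2 * dist x c * dist y z + (dist y z)\<^sup>2 / real (Suc n))"
      using Q2_approx[OF npc _ t s, of "Suc n"] by simp
    then show "Qk (\<lambda>u v. (dist u v)\<^sup>2) x c y z \<le> f n" unfolding f_def by (simp add: divide_inverse)
  qed
qed

lemma dist_diff1: "\<bar>dist x u - dist x v\<bar> \<le> dist u v"
  for x u v :: "'a::metric_space"
  using abs_dist_diff_le[of u x v] by (simp add: dist_commute)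

lemma dist_diff2: "\<bar>dist x u - dist c u\<bar> \<le> dist x c"
  for x u c :: "'a::metric_space"
  using abs_dist_diff_le[of x u c] by (simp add: dist_commute)

lemma two_pow_powr: "((2::real) ^ k) powr g = (2 powr g) ^ k"
proof -
  have "((2::real) ^ k) powr g = (2 powr real k) powr g" by (simp add: powr_realpow)
  also have "\<dots> = 2 powr (real k * g)" by (simp add: powr_powr)
  also have "\<dots> = (2 powr g) ^ k" by (simp add: powr_power)
  finally show ?thesis .
qed

lemma alpha_QI:
  fixes x c y z :: "'a::metric_space"
  assumes npc: "NPC_space TYPE('a)" and g: "0 < g" "g \<le> 1"
  shows "Qk (\<lambda>u v. dist u v powr (1+g)) x c y z \<le> (1+g) * 2 powr (1-g) * dist x c powr g * dist y z"
proof -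
  define t where "t = dist x c"
  define s where "s = dist y z"
  define Lc where "Lc = (1+g) * 2 powr (1-g) * t powr g"
  define f where "f k = Lc * s + 3 * (1+g) * (s powr g * s) * (inverse (2 powr g)) ^ k" for k
  have "(1::real) = 2 powr 0" by simp
  also have "\<dots> < 2 powr g" using g by (intro powr_less_mono) auto
  finally have "inverse (2 powr g) < (1::real)" by (simp add: inverse_less_1_iff)
  hence "f \<longlonglongrightarrow> Lc * s + 3 * (1+g) * (s powr g * s) * 0"
    unfolding f_def using g by (intro tendsto_intros) simp
  hence lim: "f \<longlonglongrightarrow> Lc * s" by simp
  have bound: "Qk (\<lambda>u v. dist u v powr (1+g)) x c y z \<le> f k" for k
  proof -
    obtain q where q: "q 0 = y" "q (2^k) = z" "\<forall>j<2^k. dist (q j) (q (Suc j)) \<le> s / 2^k"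
      using dyadic_chain[OF npc, of y k z] unfolding s_def by blast
    define e where "e = s / 2^k"
    have e0: "0 \<le> e" unfolding e_def s_def by simp
    have "Qk (\<lambda>u v. dist u v powr (1+g)) x c y z
        = (\<Sum>j<2^k. Qk (\<lambda>u v. dist u v powr (1+g)) x c (q j) (q (Suc j)))"
      using tele2[where g="\<lambda>u v. dist u v powr (1+g)" and x=x and c=c and q=q and M="2^k"] q by simp
    also have "\<dots> \<le> (\<Sum>j<(2::nat)^k. Lc * e + 3 * (1+g) * (e powr g * e))"
    proof (intro sum_mono)
      fix j assume j: "j \<in> {..<(2::nat)^k}"
      define sj where "sj = dist (q j) (q (Suc j))"
      have sje: "sj \<le> e" using q(3) j unfolding sj_def e_def by auto
      have sj0: "0 \<le> sj" unfolding sj_def by simp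
      have q2: "(dist x (q j))\<^sup>2 - (dist c (q j))\<^sup>2 - (dist x (q (Suc j)))\<^sup>2 + (dist c (q (Suc j)))\<^sup>2
           \<le> 2 * t * sj"
        using Q2_bound[OF npc, of x c "q j" "q (Suc j)"] unfolding Qk_def t_def sj_def by simp
      have "Qk (\<lambda>u v. dist u v powr (1+g)) x c (q j) (q (Suc j))
          \<le> (1+g) * 2 powr (1-g) * t powr g * sj + 3 * (1+g) * (sj powr g * sj)"
        unfolding Qk_def
        by (rule local_alpha[OF g _ _ _ _ _ _ _ q2]) (auto simp: sj_def t_def dist_diff1 dist_diff2)
      also have "\<dots> \<le> Lc * e + 3 * (1+g) * (e powr g * e)"
        unfolding Lc_def using sje sj0 g
        by (intro add_mono mult_left_mono mult_mono powr_mono2) auto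
      finally show "Qk (\<lambda>u v. dist u v powr (1+g)) x c (q j) (q (Suc j)) \<le> Lc * e + 3 * (1+g) * (e powr g * e)" .
    qed
    also have "\<dots> = 2^k * (Lc * e + 3 * (1+g) * (e powr g * e))" by simp
    also have "\<dots> = f k"
    proof -
      have "e powr g = s powr g / (2 powr g) ^ k" unfolding e_def
        by (simp add: powr_divide two_pow_powr)
      hence "e powr g = s powr g * (inverse (2 powr g)) ^ k" by (simp add: divide_inverse power_inverse)
      then show ?thesis unfolding f_def e_def by (simp add: field_simps)
    qed
    finally show ?thesis .
  qed
  have "Qk (\<lambda>u v. dist u v powr (1+g)) x c y z \<le> Lc * s"
    by (rule LIMSEQ_le_const[OF lim]) (use bound in blast)
  then show ?thesis unfolding Lc_def t_def s_def by simp
qed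

lemma emp_dist_bound:
  fixes F1 F2 G :: "'a \<Rightarrow> real"
  assumes "\<And>y. \<bar>F1 y - F2 y\<bar> \<le> \<tau> * G y" "0 \<le> \<tau>"
  shows "emp_dist n x F1 F2 \<le> \<tau> * emp_norm n x G"
proof -
  have "(\<Sum>i=1..n. (F1 (x i) - F2 (x i))\<^sup>2) \<le> (\<Sum>i=1..n. \<tau>\<^sup>2 * (G (x i))\<^sup>2)"
  proof (intro sum_mono)
    fix i
    have "(F1 (x i) - F2 (x i))\<^sup>2 = \<bar>F1 (x i) - F2 (x i)\<bar>\<^sup>2" by simp
    also have "\<dots> \<le> (\<tau> * G (x i))\<^sup>2" using assms(1)[of "x i"] by (intro power_mono) auto
    finally show "(F1 (x i) - F2 (x i))\<^sup>2 \<le> \<tau>\<^sup>2 * (G (x i))\<^sup>2" by (simp add: power_mult_distrib)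
  qed
  hence "1 / real n * (\<Sum>i=1..n. (F1 (x i) - F2 (x i))\<^sup>2) \<le> 1 / real n * (\<Sum>i=1..n. \<tau>\<^sup>2 * (G (x i))\<^sup>2)"
    by (intro mult_left_mono) auto
  also have "\<dots> = \<tau>\<^sup>2 * (1 / real n * (\<Sum>i=1..n. (G (x i))\<^sup>2))"
    by (simp add: sum_distrib_left[symmetric])
  finally have "1 / real n * (\<Sum>i=1..n. (F1 (x i) - F2 (x i))\<^sup>2) \<le> \<tau>\<^sup>2 * (1 / real n * (\<Sum>i=1..n. (G (x i))\<^sup>2))" .
  hence "sqrt (1 / real n * (\<Sum>i=1..n. (F1 (x i) - F2 (x i))\<^sup>2)) \<le> sqrt (\<tau>\<^sup>2 * (1 / real n * (\<Sum>i=1..n. (G (x i))\<^sup>2)))"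
    by (rule real_sqrt_le_mono)
  also have "\<dots> = sqrt (\<tau>\<^sup>2) * sqrt (1 / real n * (\<Sum>i=1..n. (G (x i))\<^sup>2))" by (rule real_sqrt_mult)
  also have "\<dots> = \<tau> * emp_norm n x G" unfolding emp_norm_def using assms(2) by simp
  finally show ?thesis unfolding emp_dist_def emp_norm_def .
qed

lemma covering_mono:
  assumes "\<And>C. finite C \<Longrightarrow> S \<subseteq> (\<Union>c\<in>C. {x. \<rho> c x \<le> r}) \<Longrightarrow>
             \<exists>C'. finite C' \<and> card C' \<le> card C \<and> S' \<subseteq> (\<Union>c\<in>C'. {x. \<rho>' c x \<le> r'})"
  shows "covering_number r' S' \<rho>' \<le> covering_number r S \<rho>"
  unfolding covering_number_def
proof (rule Inf_mono)
  fix b assume "b \<in> (\<lambda>C. ereal (real (card C))) ` {C. finite C \<and> S \<subseteq> (\<Union>c\<in>C. {x. \<rho> c x \<le> r})}"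
  then obtain C where C: "finite C" "S \<subseteq> (\<Union>c\<in>C. {x. \<rho> c x \<le> r})" and b: "b = ereal (real (card C))" by blast
  obtain C' where "finite C'" "card C' \<le> card C" "S' \<subseteq> (\<Union>c\<in>C'. {x. \<rho>' c x \<le> r'})" using assms[OF C] by blast
  then show "\<exists>a\<in>(\<lambda>C. ereal (real (card C))) ` {C. finite C \<and> S' \<subseteq> (\<Union>c\<in>C. {x. \<rho>' c x \<le> r'})}. a \<le> b"
    using b by (intro bexI[of _ "ereal (real (card C'))"]) auto
qed

theorem proposition4p3:
  fixes P :: "'a::polish_space measure"
    and \<Omega> :: "'w measure"
    and X :: "nat \<Rightarrow> 'w \<Rightarrow> 'a"
    and xs :: 'a
    and \<alpha> K A1 D1 :: real
  defines "\<eta> \<equiv> (\<lambda>x y. dist x y powr \<alpha>)"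
  defines "\<beta> \<equiv> 2 - 2 / \<alpha>"
  assumes npc: "NPC_space TYPE('a)"
    and prob: "prob_space P" and sets_P: "sets P = sets borel"
    and second_moment: "\<exists>z. integrable P (\<lambda>y. (dist z y)\<^sup>2)"
    and minimizer: "\<forall>x. (LINT y|P. \<eta> xs y) \<le> (LINT y|P. \<eta> x y)"
    and sample_prob: "prob_space \<Omega>"
    and sample_meas: "\<forall>i. X i \<in> measurable \<Omega> borel"
    and sample_indep: "prob_space.indep_vars \<Omega> (\<lambda>_. borel) X UNIV"
    and sample_law: "\<forall>i. distr \<Omega> borel (X i) = P"
    and alpha: "1 < \<alpha>" "\<alpha> \<le> 2"
    and K_pos: "K > 0"
    and A2: "\<forall>x. (\<alpha> * 2 powr (1 - \<alpha>) * dist x xs powr (\<alpha> - 1))\<^sup>2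
               \<le> K * (LINT y|P. \<eta> x y - \<eta> xs y) powr \<beta>"
    and A1_pos: "A1 > 0" and D1_pos: "D1 > 0"
    and B1': "\<forall>r>0. \<forall>\<tau>. 0 < \<tau> \<and> \<tau> \<le> r \<longrightarrow>
               covering_number \<tau> (cball xs r) dist \<le> ereal ((A1 * r / \<tau>) powr D1)"
  shows "\<forall>\<delta>>0. \<forall>n\<ge>1. \<forall>\<tau>. 0 < \<tau> \<and> \<tau> \<le> 1 \<longrightarrow> (\<forall>\<omega>\<in>space \<Omega>.
           covering_number (\<tau> * emp_norm n (\<lambda>i. X i \<omega>) (H_eta P K \<beta> \<delta>))
              (F_eta P \<eta> xs \<delta>) (emp_dist n (\<lambda>i. X i \<omega>))
           \<le> ereal ((A1 / \<tau> powr (1 / (\<alpha> - 1))) powr D1))"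
proof (intro allI impI ballI)
  fix \<delta> :: real and n :: nat and \<tau> :: real and \<omega>
  assume \<delta>: "\<delta> > 0" and n: "n \<ge> 1" and \<tau>: "0 < \<tau> \<and> \<tau> \<le> 1" and \<omega>: "\<omega> \<in> space \<Omega>"
  define g where "g = \<alpha> - 1"
  have g: "0 < g" "g \<le> 1" using alpha unfolding g_def by auto
  have ag: "\<alpha> = 1 + g" unfolding g_def by simp
  interpret P: prob_space P by (rule prob)
  obtain z0 where z0: "integrable P (\<lambda>y. (dist z0 y)\<^sup>2)" using second_moment by blast
  have meas: "f \<in> borel_measurable P" if "continuous_on UNIV f" for f :: "'a \<Rightarrow> real"
    by (subst measurable_cong_sets[OF sets_P refl]) (rule borel_measurable_continuous_onI[OF that])
  have int_sq: "integrable P (\<lambda>y. (dist x y)\<^sup>2)" for x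
  proof (rule Bochner_Integration.integrable_bound)
    show "integrable P (\<lambda>y. 2 * (dist x z0)\<^sup>2 + 2 * (dist z0 y)\<^sup>2)"
      using z0 by (intro Bochner_Integration.integrable_add integrable_mult_right P.integrable_const) auto
    show "(\<lambda>y. (dist x y)\<^sup>2) \<in> borel_measurable P" by (intro meas continuous_intros)
    show "AE y in P. norm ((dist x y)\<^sup>2) \<le> norm (2 * (dist x z0)\<^sup>2 + 2 * (dist z0 y)\<^sup>2)"
    proof (intro AE_I2)
      fix y
      have "dist x y \<le> dist x z0 + dist z0 y" by (rule dist_triangle)
      hence "(dist x y)\<^sup>2 \<le> (dist x z0 + dist z0 y)\<^sup>2" by (intro power_mono) auto
      also have "\<dots> \<le> 2 * (dist x z0)\<^sup>2 + 2 * (dist z0 y)\<^sup>2"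
        using sum_squares_ge_zero[of "dist x z0 - dist z0 y" 0] by (simp add: power2_eq_square algebra_simps)
      finally show "norm ((dist x y)\<^sup>2) \<le> norm (2 * (dist x z0)\<^sup>2 + 2 * (dist z0 y)\<^sup>2)" by simp
    qed
  qed
  have small: "u powr a \<le> 1 + u\<^sup>2" if "0 \<le> u" "0 < a" "a \<le> 2" for u a :: real
  proof (cases "u \<le> 1")
    case True
    hence "u powr a \<le> 1 powr a" using that by (intro powr_mono2) auto
    moreover have "0 \<le> u\<^sup>2" by simp
    ultimately show ?thesis by (simp only: powr_one_eq_one)
  next
    case False
    hence "u powr a \<le> u powr 2" using that by (intro powr_mono) auto
    also have "\<dots> = u\<^sup>2" using False powr_realpow[of u 2] by simp
    finally show ?thesis by simp
  qed
  have int_eta: "integrable P (\<lambda>y. \<eta> x y)" for x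
  proof (rule Bochner_Integration.integrable_bound)
    show "integrable P (\<lambda>y. 1 + (dist x y)\<^sup>2)" using int_sq[of x] by (intro Bochner_Integration.integrable_add P.integrable_const)
    show "(\<lambda>y. \<eta> x y) \<in> borel_measurable P" unfolding \<eta>_def
    proof (rule powr_real_measurable)
      show "(\<lambda>y. dist x y) \<in> borel_measurable P" by (intro meas continuous_intros)
    qed simp
    show "AE y in P. norm (\<eta> x y) \<le> norm (1 + (dist x y)\<^sup>2)"
    proof (intro AE_I2)
      fix y
      have "dist x y powr \<alpha> \<le> 1 + (dist x y)\<^sup>2" using small[of "dist x y" \<alpha>] alpha by simp
      then show "norm (\<eta> x y) \<le> norm (1 + (dist x y)\<^sup>2)" unfolding \<eta>_def by simp
    qed
  qed
  have int_d: "integrable P (\<lambda>z. dist y z)" for y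
  proof (rule Bochner_Integration.integrable_bound)
    show "integrable P (\<lambda>z. 1 + (dist y z)\<^sup>2)" using int_sq[of y] by (intro Bochner_Integration.integrable_add P.integrable_const)
    show "(\<lambda>z. dist y z) \<in> borel_measurable P" by (intro meas continuous_intros)
    show "AE z in P. norm (dist y z) \<le> norm (1 + (dist y z)\<^sup>2)"
    proof (intro AE_I2)
      fix z
      have "dist y z powr 1 \<le> 1 + (dist y z)\<^sup>2" using small[of "dist y z" 1] by simp
      then show "norm (dist y z) \<le> norm (1 + (dist y z)\<^sup>2)" by simp
    qed
  qed
  define S where "S = sqrt (K * \<delta> powr \<beta>)"
  have \<beta>: "0 < \<beta>" "\<beta> \<le> 1" unfolding \<beta>_def using alpha by (auto simp: field_simps)
  have Spos: "S > 0" unfolding S_def using K_pos \<delta> by simp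
  have S2: "S\<^sup>2 = K * \<delta> powr \<beta>" unfolding S_def using K_pos \<delta> by simp
  define c0 where "c0 = \<alpha> * 2 powr (1 - \<alpha>)"
  have c0pos: "c0 > 0" unfolding c0_def using alpha by simp
  define R where "R = (S / c0) powr (1/g)"
  define \<rho> where "\<rho> = (S * \<tau> / c0) powr (1/g)"
  have Rpos: "R > 0" unfolding R_def using Spos c0pos by simp
  have \<rho>pos: "\<rho> > 0" unfolding \<rho>_def using Spos c0pos \<tau> by simp
  have \<rho>R: "\<rho> = R * \<tau> powr (1/g)" unfolding \<rho>_def R_def
    using powr_mult[of "S / c0" \<tau> "1/g"] by (simp add: mult.commute)
  have \<tau>g: "\<tau> powr (1/g) \<le> 1" using \<tau> g powr_mono2[of "1/g" \<tau> 1] by simp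
  have \<tau>gpos: "\<tau> powr (1/g) > 0" using \<tau> by simp
  have \<rho>le: "\<rho> \<le> R" using \<rho>R \<tau>g Rpos by (simp add: mult_left_le)
  have \<rho>g: "\<rho> powr g = S * \<tau> / c0" unfolding \<rho>_def using g Spos c0pos \<tau> by (simp add: powr_powr)
  have inM: "dist xs x \<le> R" if "x \<in> M_eta P \<eta> xs \<delta>" for x
  proof -
    define Lx where "Lx = (LINT y|P. \<eta> x y - \<eta> xs y)"
    have Lxd: "Lx \<le> \<delta>" using that unfolding M_eta_def Lx_def by simp
    have "Lx = (LINT y|P. \<eta> x y) - (LINT y|P. \<eta> xs y)" unfolding Lx_def using int_eta by simp
    hence Lx0: "0 \<le> Lx" using minimizer by simp
    have "(c0 * dist x xs powr g)\<^sup>2 \<le> K * Lx powr \<beta>" using A2[rule_format, of x] unfolding c0_def Lx_def g_def .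
    also have "\<dots> \<le> K * \<delta> powr \<beta>" using K_pos Lx0 Lxd \<beta> by (intro mult_left_mono powr_mono2) auto
    finally have "(c0 * dist x xs powr g)\<^sup>2 \<le> S\<^sup>2" using S2 by simp
    hence "c0 * dist x xs powr g \<le> S" using Spos power2_le_imp_le[of "c0 * dist x xs powr g" S] by simp
    hence "dist x xs powr g \<le> S / c0" using c0pos by (simp add: field_simps)
    hence "(dist x xs powr g) powr (1/g) \<le> (S / c0) powr (1/g)" using g by (intro powr_mono2) auto
    moreover have "(dist x xs powr g) powr (1/g) = dist x xs" using g by (simp add: powr_powr)
    ultimately show ?thesis unfolding R_def by (simp add: dist_commute)
  qed
  have key: "\<bar>f_eta P \<eta> xs c y - f_eta P \<eta> xs x y\<bar> \<le> \<tau> * H_eta P K \<beta> \<delta> y" if cx: "dist c x \<le> \<rho>" for c x y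
  proof -
    define I where "I w = (LINT z|P. \<eta> w z)" for w
    define h where "h z = (\<eta> c y - \<eta> x y) - (\<eta> c z - \<eta> x z)" for z
    define B where "B = \<alpha> * 2 powr (1 - g) * dist c x powr g"
    have diff: "f_eta P \<eta> xs c y - f_eta P \<eta> xs x y = (\<eta> c y - \<eta> x y) - (I c - I x)"
      unfolding f_eta_def eta_c_def I_def by simp
    have intdiff: "integrable P (\<lambda>z. \<eta> c z - \<eta> x z)" using int_eta by simp
    have "(LINT z|P. h z) = (LINT z|P. (\<eta> c y - \<eta> x y)) - (LINT z|P. \<eta> c z - \<eta> x z)"
      unfolding h_def using intdiff by (intro Bochner_Integration.integral_diff P.integrable_const)
    also have "\<dots> = (\<eta> c y - \<eta> x y) - (I c - I x)" unfolding I_def using int_eta P.prob_space by simp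
    finally have hI: "(LINT z|P. h z) = f_eta P \<eta> xs c y - f_eta P \<eta> xs x y" using diff by simp
    have hb1: "h z \<le> B * dist y z" for z
    proof -
      have "h z = Qk (\<lambda>u v. dist u v powr (1+g)) c x y z" unfolding h_def Qk_def \<eta>_def ag by simp
      also have "\<dots> \<le> (1+g) * 2 powr (1-g) * dist c x powr g * dist y z" by (rule alpha_QI[OF npc g])
      finally show ?thesis unfolding B_def ag .
    qed
    have hb2: "- h z \<le> B * dist y z" for z
    proof -
      have "- h z = Qk (\<lambda>u v. dist u v powr (1+g)) c x z y" unfolding h_def Qk_def \<eta>_def ag by simp
      also have "\<dots> \<le> (1+g) * 2 powr (1-g) * dist c x powr g * dist z y" by (rule alpha_QI[OF npc g])
      finally show ?thesis unfolding B_def ag by (simp add: dist_commute)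
    qed
    have inth: "integrable P h" unfolding h_def by (rule Bochner_Integration.integrable_diff[OF P.integrable_const intdiff])
    have intB: "integrable P (\<lambda>z. B * dist y z)" using int_d by simp
    have "(LINT z|P. h z) \<le> (LINT z|P. B * dist y z)" using inth intB hb1 by (intro integral_mono) auto
    moreover have "- (LINT z|P. h z) \<le> (LINT z|P. B * dist y z)"
    proof -
      have "(LINT z|P. - h z) \<le> (LINT z|P. B * dist y z)" using inth intB hb2 by (intro integral_mono) auto
      then show ?thesis by simp
    qed
    ultimately have "\<bar>LINT z|P. h z\<bar> \<le> B * (LINT z|P. dist y z)" by simp
    also have "\<dots> \<le> (2 * S * \<tau>) * (LINT z|P. dist y z)"
    proof (intro mult_right_mono)
      show "0 \<le> (LINT z|P. dist y z)" by (intro integral_nonneg_AE) auto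
      have "dist c x powr g \<le> \<rho> powr g" using cx g by (intro powr_mono2) auto
      hence "B \<le> \<alpha> * 2 powr (1 - g) * (S * \<tau> / c0)" unfolding B_def using \<rho>g alpha by (intro mult_left_mono) auto
      also have "\<dots> = 2 * S * \<tau>"
      proof -
        have "2 powr (1 - g) = 2 powr (1 + (1 - \<alpha>))" unfolding g_def by simp
        also have "\<dots> = 2 * 2 powr (1 - \<alpha>)" by (simp only: powr_add) simp
        finally have "2 powr (1 - g) = 2 * 2 powr (1 - \<alpha>)" .
        then show ?thesis unfolding c0_def using alpha by (simp add: field_simps)
      qed
      finally show "B \<le> 2 * S * \<tau>" .
    qed
    also have "\<dots> = \<tau> * H_eta P K \<beta> \<delta> y" unfolding H_eta_def S_def by simp
    finally show ?thesis using hI by simp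
  qed
  have "covering_number (\<tau> * emp_norm n (\<lambda>i. X i \<omega>) (H_eta P K \<beta> \<delta>)) (F_eta P \<eta> xs \<delta>) (emp_dist n (\<lambda>i. X i \<omega>))
      \<le> covering_number \<rho> (cball xs R) dist"
  proof (rule covering_mono)
    fix C :: "'a set" assume C: "finite C" "cball xs R \<subseteq> (\<Union>c\<in>C. {x. dist c x \<le> \<rho>})"
    show "\<exists>C'. finite C' \<and> card C' \<le> card C \<and> F_eta P \<eta> xs \<delta> \<subseteq> (\<Union>c\<in>C'. {x. emp_dist n (\<lambda>i. X i \<omega>) c x \<le> \<tau> * emp_norm n (\<lambda>i. X i \<omega>) (H_eta P K \<beta> \<delta>)})"
    proof (intro exI[of _ "f_eta P \<eta> xs ` C"] conjI)
      show "finite (f_eta P \<eta> xs ` C)" using C by simp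
      show "card (f_eta P \<eta> xs ` C) \<le> card C" by (rule card_image_le[OF C(1)])
      show "F_eta P \<eta> xs \<delta> \<subseteq> (\<Union>c\<in>f_eta P \<eta> xs ` C. {x. emp_dist n (\<lambda>i. X i \<omega>) c x \<le> \<tau> * emp_norm n (\<lambda>i. X i \<omega>) (H_eta P K \<beta> \<delta>)})"
      proof
        fix f assume "f \<in> F_eta P \<eta> xs \<delta>"
        then obtain x where x: "x \<in> M_eta P \<eta> xs \<delta>" and f: "f = f_eta P \<eta> xs x" unfolding F_eta_def by blast
        have "x \<in> cball xs R" using inM[OF x] by simp
        then obtain c where c: "c \<in> C" "dist c x \<le> \<rho>" using C(2) by blast
        have "emp_dist n (\<lambda>i. X i \<omega>) (f_eta P \<eta> xs c) f \<le> \<tau> * emp_norm n (\<lambda>i. X i \<omega>) (H_eta P K \<beta> \<delta>)"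
          unfolding f using key[OF c(2)] \<tau> by (intro emp_dist_bound) auto
        then show "f \<in> (\<Union>c\<in>f_eta P \<eta> xs ` C. {x. emp_dist n (\<lambda>i. X i \<omega>) c x \<le> \<tau> * emp_norm n (\<lambda>i. X i \<omega>) (H_eta P K \<beta> \<delta>)})"
          using c(1) by blast
      qed
    qed
  qed
  also have "\<dots> \<le> ereal ((A1 * R / \<rho>) powr D1)" using B1' Rpos \<rho>pos \<rho>le by blast
  also have "A1 * R / \<rho> = A1 / \<tau> powr (1 / (\<alpha> - 1))" unfolding \<rho>R g_def using Rpos by simp
  finally show "covering_number (\<tau> * emp_norm n (\<lambda>i. X i \<omega>) (H_eta P K \<beta> \<delta>)) (F_eta P \<eta> xs \<delta>) (emp_dist n (\<lambda>i. X i \<omega>))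
      \<le> ereal ((A1 / \<tau> powr (1 / (\<alpha> - 1))) powr D1)" .
qed

end
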